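(* For an integer $d\ge1$, let $a^+(n;d)$ (resp. $a^-(n;d)$) denote the number of partitions of $n$ whose Frobenius symbol has exactly $d$ columns and whose last parity block is positive (resp. negative). Then, as formal power series in $q$, \[ \sum_{n=1}^{\infty} a^+(n;d) q^n = \frac{q^{d^2+d}}{(q;q)_d^2 \, (1+q^d)} \qquad\text{and}\qquad \sum_{n=1}^{\infty} a^-(n;d) q^n = \frac{q^{d^2}}{(q;q)_d^2 \,(1+q^d)}. \]
   Context: Every partition $\lambda$ of $n$ is represented by its Frobenius symbol $\begin{pmatrix} x_1 & \cdots & x_d\\ y_1&\cdots & y_d\end{pmatrix}$, where $d$ is the number of cells on the main diagonal of the Ferrers diagram, $x_i$ (resp. $y_i$) is the number of cells in row $i$ to the right of (resp. in column $i$ below) the diagonal, so $x_1>\cdots>x_d\ge 0$, $y_1>\cdots>y_d\ge0$ and $\sum_{i=1}^d(x_i+y_i+1)=n$; $d$ is called the number of columns. Column $i$ is positive if $x_i-y_i\ge 1$ and negative if $x_i-y_i\le 0$. The parity blocks of $\lambda$ are the maximal sets of contiguous columns all having the same sign; a block is positive (resp. negative) if its columns are positive (resp. negative). Notation: $(a;q)_n=(1-a)(1-aq)\cdots(1-aq^{n-1})$. *)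

theory Defs
  imports Main "HOL-Computational_Algebra.Formal_Power_Series"
begin

definition is_partition :: "nat \<Rightarrow> nat list \<Rightarrow> bool" where
  "is_partition n p \<longleftrightarrow> sorted_wrt (\<ge>) p \<and> 0 \<notin> set p \<and> sum_list p = n"

(* i-th part, 1-based (0 beyond the length) *)
definition part :: "nat list \<Rightarrow> nat \<Rightarrow> nat" where
  "part p i = (if 1 \<le> i \<and> i \<le> length p then p ! (i - 1) else 0)"

definition conj_part :: "nat list \<Rightarrow> nat \<Rightarrow> nat" where
  "conj_part p j = length (filter (\<lambda>a. j \<le> a) p)"

(* number of cells on the main diagonal = number of Frobenius columns d *)
definition frob_d :: "nat list \<Rightarrow> nat" where
  "frob_d p = card {i \<in> {1..length p}. i \<le> part p i}"

(* Frobenius symbol entries: x_i = cells of row i right of diagonal, y_i = cells of column i below *)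
definition frob_x :: "nat list \<Rightarrow> nat \<Rightarrow> nat" where
  "frob_x p i = part p i - i"

definition frob_y :: "nat list \<Rightarrow> nat \<Rightarrow> nat" where
  "frob_y p i = conj_part p i - i"

definition col_pos :: "nat list \<Rightarrow> nat \<Rightarrow> bool" where
  "col_pos p i \<longleftrightarrow> int (frob_x p i) - int (frob_y p i) \<ge> 1"

definition same_sign_run :: "nat list \<Rightarrow> nat set \<Rightarrow> bool" where
  "same_sign_run p B \<longleftrightarrow> (\<exists>a b. 1 \<le> a \<and> a \<le> b \<and> b \<le> frob_d p \<and> B = {a..b} \<and>
       (\<forall>i\<in>B. \<forall>j\<in>B. col_pos p i = col_pos p j))"

definition parity_block :: "nat list \<Rightarrow> nat set \<Rightarrow> bool" where
  "parity_block p B \<longleftrightarrow> same_sign_run p B \<and> (\<forall>C. same_sign_run p C \<and> B \<subseteq> C \<longrightarrow> C = B)"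

definition last_block_positive :: "nat list \<Rightarrow> bool" where
  "last_block_positive p \<longleftrightarrow>
     (\<exists>B. parity_block p B \<and> frob_d p \<in> B \<and> (\<forall>i\<in>B. col_pos p i))"

definition last_block_negative :: "nat list \<Rightarrow> bool" where
  "last_block_negative p \<longleftrightarrow>
     (\<exists>B. parity_block p B \<and> frob_d p \<in> B \<and> (\<forall>i\<in>B. \<not> col_pos p i))"

definition a_plus :: "nat \<Rightarrow> nat \<Rightarrow> nat" where
  "a_plus n d = card {p. is_partition n p \<and> frob_d p = d \<and> last_block_positive p}"

definition a_minus :: "nat \<Rightarrow> nat \<Rightarrow> nat" where
  "a_minus n d = card {p. is_partition n p \<and> frob_d p = d \<and> last_block_negative p}"

definition qpoch_q :: "nat \<Rightarrow> rat fps" where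
  "qpoch_q d = (\<Prod>k\<in>{1..d}. 1 - fps_X ^ k)"

end

theory Submission
  imports Defs
begin


definition cnt :: "'a set \<Rightarrow> ('a \<Rightarrow> nat) \<Rightarrow> nat \<Rightarrow> nat" where
  "cnt S w n = card {x\<in>S. w x = n}"

definition finfib :: "'a set \<Rightarrow> ('a \<Rightarrow> nat) \<Rightarrow> bool" where
  "finfib S w \<longleftrightarrow> (\<forall>n. finite {x\<in>S. w x = n})"

definition gf :: "'a set \<Rightarrow> ('a \<Rightarrow> nat) \<Rightarrow> rat fps" where
  "gf S w = Abs_fps (\<lambda>n. of_nat (cnt S w n))"

lemma cnt_bij:
  assumes "bij_betw f A B" "\<And>a. a \<in> A \<Longrightarrow> v (f a) = w a"
  shows "cnt B v n = cnt A w n"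
proof -
  have "{b\<in>B. v b = n} = f ` {a\<in>A. w a = n}"
    using assms by (auto simp: bij_betw_def)
  moreover have "inj_on f {a\<in>A. w a = n}"
    using assms(1) by (auto simp: bij_betw_def inj_on_def)
  ultimately show ?thesis unfolding cnt_def by (simp add: card_image)
qed

lemma finfib_bij:
  assumes "bij_betw f A B" "\<And>a. a \<in> A \<Longrightarrow> v (f a) = w a" "finfib A w"
  shows "finfib B v"
proof -
  have "{b\<in>B. v b = n} = f ` {a\<in>A. w a = n}" for n
    using assms by (auto simp: bij_betw_def)
  thus ?thesis using assms(3) unfolding finfib_def by simp
qed

lemma gf_bij:
  assumes "bij_betw f A B" "\<And>a. a \<in> A \<Longrightarrow> v (f a) = w a"
  shows "gf B v = gf A w"
  using cnt_bij[of f A B v w] assms unfolding gf_def by simp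

lemma prod_fib:
  fixes w :: "'a \<Rightarrow> nat" and v :: "'b \<Rightarrow> nat"
  shows "{x\<in>A\<times>B. (case x of (a,b) \<Rightarrow> w a + v b) = n} =
     (\<Union>i\<in>{..n}. {a\<in>A. w a = i} \<times> {b\<in>B. v b = n - i})"
  by auto

lemma finfib_prod:
  assumes "finfib A w" "finfib B v"
  shows "finfib (A \<times> B) (\<lambda>(a,b). w a + v b)"
  using assms unfolding finfib_def prod_fib by auto

lemma cnt_prod:
  assumes "finfib A w" "finfib B v"
  shows "cnt (A \<times> B) (\<lambda>(a,b). w a + v b) n = (\<Sum>i=0..n. cnt A w i * cnt B v (n - i))"
proof -
  have "cnt (A \<times> B) (\<lambda>(a,b). w a + v b) n =
     card (\<Union>i\<in>{..n}. {a\<in>A. w a = i} \<times> {b\<in>B. v b = n - i})"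
    unfolding cnt_def prod_fib by simp
  also have "\<dots> = (\<Sum>i\<in>{..n}. card ({a\<in>A. w a = i} \<times> {b\<in>B. v b = n - i}))"
    using assms unfolding finfib_def by (intro card_UN_disjoint) auto
  also have "\<dots> = (\<Sum>i=0..n. cnt A w i * cnt B v (n - i))"
    by (simp add: cnt_def card_cartesian_product atLeast0AtMost)
  finally show ?thesis .
qed

lemma gf_prod:
  assumes "finfib A w" "finfib B v"
  shows "gf (A \<times> B) (\<lambda>(a,b). w a + v b) = gf A w * gf B v"
  unfolding gf_def by (rule fps_ext) (simp add: fps_mult_nth cnt_prod[OF assms])

lemma cnt_shift:
  "cnt A (\<lambda>a. w a + K) n = (if n < K then 0 else cnt A w (n - K))"
  unfolding cnt_def by (cases "n < K") (auto intro: arg_cong[where f=card])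

lemma gf_shift: "gf A (\<lambda>a. w a + K) = fps_X ^ K * gf A w"
  unfolding gf_def by (rule fps_ext) (simp add: fps_X_power_mult_nth cnt_shift)

lemma finfib_shift: "finfib A w \<Longrightarrow> finfib A (\<lambda>a. w a + K)"
  unfolding finfib_def
proof (intro allI)
  fix n assume "\<forall>n. finite {x \<in> A. w x = n}"
  moreover have "{a\<in>A. w a + K = n} \<subseteq> {a\<in>A. w a = n - K}" by auto
  ultimately show "finite {a\<in>A. w a + K = n}" by (meson finite_subset)
qed

lemma cnt_lin:
  assumes "k > 0"
  shows "cnt (UNIV::nat set) (\<lambda>a. k * a) n = (if k dvd n then 1 else 0)"
proof -
  have "{x \<in> (UNIV::nat set). k * x = n} = (if k dvd n then {n div k} else {})"
    using assms by auto
  thus ?thesis unfolding cnt_def by simp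
qed

lemma finfib_lin: "k > 0 \<Longrightarrow> finfib (UNIV::nat set) (\<lambda>a. k * a)"
  unfolding finfib_def
proof
  fix n assume "k > 0"
  have "{x \<in> (UNIV::nat set). k * x = n} \<subseteq> {..n}" using \<open>k>0\<close>
    by auto
  thus "finite {x \<in> (UNIV::nat set). k * x = n}" by (rule finite_subset) simp
qed

lemma gf_lin:
  assumes "k > 0"
  shows "gf (UNIV::nat set) (\<lambda>a. k * a) = inverse (1 - fps_X ^ k)"
proof -
  define G where "G = gf (UNIV::nat set) (\<lambda>a. k * a)"
  have "(1 - fps_X ^ k) * G = 1"
  proof (rule fps_ext)
    fix n
    have "fps_nth ((1 - fps_X ^ k) * G) n = fps_nth G n - fps_nth (fps_X ^ k * G) n"
      by (simp add: algebra_simps)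
    also have "\<dots> = fps_nth (1::rat fps) n"
      using assms unfolding G_def gf_def fps_X_power_mult_nth
      by (auto simp: cnt_lin dvd_minus_self elim: dvdE)
    finally show "fps_nth ((1 - fps_X ^ k) * G) n = fps_nth (1::rat fps) n" .
  qed
  thus ?thesis unfolding G_def by (rule fps_inverse_unique[symmetric])
qed



definition Lm :: "nat \<Rightarrow> nat list set" where
  "Lm m = {t. length t = m \<and> sorted_wrt (\<ge>) t}"

definition Bm :: "nat \<Rightarrow> nat list set" where
  "Bm m = {b. sorted_wrt (\<ge>) b \<and> (\<forall>x\<in>set b. 1 \<le> x \<and> x \<le> m)}"

lemma sum_list_map_plus: "sum_list (map (\<lambda>x. x + e) xs) = sum_list xs + length xs * (e::nat)"
  by (induction xs) auto

lemma sorted_last_le: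
  assumes "sorted_wrt (\<ge>) t" "x \<in> set t"
  shows "last t \<le> (x::nat)"
proof -
  have "t \<noteq> []" using assms by auto
  hence "t = butlast t @ [last t]" by simp
  then have "sorted_wrt (\<ge>) (butlast t @ [last t])" using assms(1) by simp
  hence "\<forall>y\<in>set (butlast t). last t \<le> y" by (simp add: sorted_wrt_append)
  thus ?thesis using assms(2) \<open>t = butlast t @ [last t]\<close>
    by (metis Un_iff empty_iff empty_set order_refl set_ConsD set_append)
qed

lemma sorted_butlast: "sorted_wrt R t \<Longrightarrow> sorted_wrt R (butlast t)"
  by (simp add: butlast_conv_take sorted_wrt_take)

lemma bij_L: "bij_betw (\<lambda>(e,s). map (\<lambda>x. x + e) (s @ [0])) (UNIV \<times> Lm m) (Lm (Suc m))"
proof -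
  define f :: "nat \<times> nat list \<Rightarrow> nat list" where "f = (\<lambda>(e,s). map (\<lambda>x. x + e) (s @ [0]))"
  define g :: "nat list \<Rightarrow> nat \<times> nat list" where "g = (\<lambda>t. (last t, map (\<lambda>x. x - last t) (butlast t)))"
  have 1: "\<forall>a\<in>UNIV \<times> Lm m. g (f a) = a"
    by (auto simp: f_def g_def butlast_append comp_def)
  have 2: "\<forall>t\<in>Lm (Suc m). f (g t) = t"
  proof
    fix t assume t: "t \<in> Lm (Suc m)"
    hence ne: "t \<noteq> []" and st: "sorted_wrt (\<ge>) t" by (auto simp: Lm_def)
    have le: "\<forall>x\<in>set (butlast t). last t \<le> x"
      using sorted_last_le[OF st] by (meson in_set_butlastD)
    have "map (\<lambda>x. x + last t) (map (\<lambda>x. x - last t) (butlast t) @ [0]) = butlast t @ [last t]"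
      using le by (simp add: comp_def map_idI)
    also have "\<dots> = t" using ne by simp
    finally show "f (g t) = t" by (simp add: f_def g_def)
  qed
  have 3: "f ` (UNIV \<times> Lm m) \<subseteq> Lm (Suc m)"
    by (auto simp: f_def Lm_def sorted_wrt_map sorted_wrt_append)
  have 4: "g ` Lm (Suc m) \<subseteq> UNIV \<times> Lm m"
  proof
    fix y assume "y \<in> g ` Lm (Suc m)"
    then obtain t where t: "t \<in> Lm (Suc m)" "y = g t" by auto
    have "sorted_wrt (\<ge>) (butlast t)" using t by (intro sorted_butlast) (simp add: Lm_def)
    hence "sorted_wrt (\<lambda>x y. y - last t \<le> x - last t) (butlast t)"
      by (rule sorted_wrt_mono_rel[rotated]) auto
    thus "y \<in> UNIV \<times> Lm m" using t by (simp add: g_def Lm_def sorted_wrt_map)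
  qed
  have "bij_betw f (UNIV \<times> Lm m) (Lm (Suc m))" by (rule bij_betw_byWitness[OF 1 2 3 4])
  thus ?thesis by (simp add: f_def)
qed

lemma gf_L: "finfib (Lm m) sum_list \<and> gf (Lm m) sum_list = inverse (qpoch_q m)"
proof (induction m)
  case 0
  have L0: "Lm 0 = {[]}" by (auto simp: Lm_def)
  have "{x\<in>Lm 0. sum_list x = n} = (if n = 0 then {[]} else {})" for n
    unfolding L0 by auto
  hence "cnt (Lm 0) sum_list n = (if n = 0 then 1 else 0)" for n
    unfolding cnt_def by simp
  hence "gf (Lm 0) sum_list = 1" unfolding gf_def by (intro fps_ext) auto
  moreover have "finfib (Lm 0) sum_list" unfolding finfib_def L0 by auto
  ultimately show ?case by (simp add: qpoch_q_def)
next
  case (Suc m)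
  have w: "sum_list ((\<lambda>(e,s). map (\<lambda>x. x + e) (s @ [0])) a) = (\<lambda>(e,s). Suc m * e + sum_list s) a"
    if "a \<in> UNIV \<times> Lm m" for a
    using that by (auto simp: sum_list_map_plus Lm_def)
  have fl: "finfib (UNIV::nat set) (\<lambda>e. Suc m * e)" by (rule finfib_lin) simp
  have fp: "finfib (UNIV \<times> Lm m) (\<lambda>(e,s). Suc m * e + sum_list s)"
    using finfib_prod[OF fl] Suc.IH by auto
  have "gf (Lm (Suc m)) sum_list = gf (UNIV \<times> Lm m) (\<lambda>(e,s). Suc m * e + sum_list s)"
    by (rule gf_bij[OF bij_L]) (rule w)
  also have "\<dots> = gf (UNIV::nat set) (\<lambda>e. Suc m * e) * gf (Lm m) sum_list"
    using gf_prod[OF fl Suc.IH[THEN conjunct1]] by simp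
  also have "\<dots> = inverse (1 - fps_X ^ Suc m) * inverse (qpoch_q m)"
    using gf_lin[of "Suc m"] Suc.IH by simp
  also have "\<dots> = inverse (qpoch_q (Suc m))"
    by (simp add: qpoch_q_def fps_inverse_mult prod.nat_ivl_Suc' mult.commute)
  moreover have "finfib (Lm (Suc m)) sum_list" by (rule finfib_bij[OF bij_L _ fp]) (rule w)
  ultimately show ?case by simp
qed

lemma sorted_replicate_ge: "sorted_wrt (\<ge>) (replicate c (x::nat))"
  by (induction c) auto

lemma split_top:
  assumes "sorted_wrt (\<ge>) xs" "\<forall>x\<in>set xs. x \<le> (M::nat)"
  shows "replicate (length (filter ((=) M) xs)) M @ filter (\<lambda>x. x \<noteq> M) xs = xs"
  using assms
proof (induction xs)
  case Nil
  then show ?case by simp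
next
  case (Cons a xs)
  show ?case
  proof (cases "a = M")
    case True
    then show ?thesis using Cons by simp
  next
    case False
    hence "a < M" using Cons.prems by auto
    hence "\<forall>y\<in>set xs. y < M" using Cons.prems(1) by auto
    hence "filter ((=) M) xs = []" "filter (\<lambda>x. x \<noteq> M) xs = xs" by (auto simp: filter_empty_conv filter_id_conv)
    then show ?thesis using False by simp
  qed
qed

lemma bij_B: "bij_betw (\<lambda>(c,b). replicate c (Suc m) @ b) (UNIV \<times> Bm m) (Bm (Suc m))"
proof -
  define f :: "nat \<times> nat list \<Rightarrow> nat list" where "f = (\<lambda>(c,b). replicate c (Suc m) @ b)"
  define g :: "nat list \<Rightarrow> nat \<times> nat list" where
    "g = (\<lambda>b. (length (filter ((=) (Suc m)) b), filter (\<lambda>x. x \<noteq> Suc m) b))"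
  have 1: "\<forall>a\<in>(UNIV::nat set) \<times> Bm m. g (f a) = a"
  proof
    fix a assume "a \<in> (UNIV::nat set) \<times> Bm m"
    then obtain c b where a: "a = (c,b)" "b \<in> Bm m" by auto
    hence "filter ((=) (Suc m)) b = []" "filter (\<lambda>x. x \<noteq> Suc m) b = b"
      by (auto simp: filter_empty_conv filter_id_conv Bm_def)
    thus "g (f a) = a" using a by (simp add: f_def g_def filter_replicate)
  qed
  have 2: "\<forall>a'\<in>Bm (Suc m). f (g a') = a'"
    using split_top by (auto simp: Bm_def f_def g_def)
  have 3: "f ` (UNIV \<times> Bm m) \<subseteq> Bm (Suc m)"
    by (auto simp: f_def Bm_def sorted_wrt_append sorted_replicate_ge) (metis le_SucI)+
  have 4: "g ` Bm (Suc m) \<subseteq> UNIV \<times> Bm m"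
    by (auto simp: g_def Bm_def sorted_wrt_filter) (metis le_Suc_eq)
  have "bij_betw f (UNIV \<times> Bm m) (Bm (Suc m))" by (rule bij_betw_byWitness[OF 1 2 3 4])
  thus ?thesis by (simp add: f_def)
qed

lemma gf_B: "finfib (Bm m) sum_list \<and> gf (Bm m) sum_list = inverse (qpoch_q m)"
proof (induction m)
  case 0
  have "b \<in> Bm 0 \<Longrightarrow> b = []" for b by (cases b) (auto simp: Bm_def)
  hence L0: "Bm 0 = {[]}" by (auto simp: Bm_def)
  have "{x\<in>Bm 0. sum_list x = n} = (if n = 0 then {[]} else {})" for n
    unfolding L0 by auto
  hence "cnt (Bm 0) sum_list n = (if n = 0 then 1 else 0)" for n
    unfolding cnt_def by simp
  hence "gf (Bm 0) sum_list = 1" unfolding gf_def by (intro fps_ext) auto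
  moreover have "finfib (Bm 0) sum_list" unfolding finfib_def L0 by auto
  ultimately show ?case by (simp add: qpoch_q_def)
next
  case (Suc m)
  have w: "sum_list ((\<lambda>(c,b). replicate c (Suc m) @ b) a) = (\<lambda>(e,s). Suc m * e + sum_list s) a"
    if "a \<in> UNIV \<times> Bm m" for a
    using that by (auto simp: sum_list_replicate)
  have fl: "finfib (UNIV::nat set) (\<lambda>e. Suc m * e)" by (rule finfib_lin) simp
  have fp: "finfib (UNIV \<times> Bm m) (\<lambda>(e,s). Suc m * e + sum_list s)"
    using finfib_prod[OF fl] Suc.IH by auto
  have "gf (Bm (Suc m)) sum_list = gf (UNIV \<times> Bm m) (\<lambda>(e,s). Suc m * e + sum_list s)"
    by (rule gf_bij[OF bij_B]) (rule w)
  also have "\<dots> = gf (UNIV::nat set) (\<lambda>e. Suc m * e) * gf (Bm m) sum_list"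
    using gf_prod[OF fl Suc.IH[THEN conjunct1]] by simp
  also have "\<dots> = inverse (1 - fps_X ^ Suc m) * inverse (qpoch_q m)"
    using gf_lin[of "Suc m"] Suc.IH by simp
  also have "\<dots> = inverse (qpoch_q (Suc m))"
    by (simp add: qpoch_q_def fps_inverse_mult prod.nat_ivl_Suc' mult.commute)
  moreover have "finfib (Bm (Suc m)) sum_list" by (rule finfib_bij[OF bij_B _ fp]) (rule w)
  ultimately show ?case by simp
qed



lemma last_block_exists:
  assumes "frob_d p = d" "d \<ge> 1"
  shows "\<exists>B. parity_block p B \<and> d \<in> B"
proof -
  define R where "R = (\<lambda>B. same_sign_run p B \<and> d \<in> B)"
  have "same_sign_run p {d..d}" unfolding same_sign_run_def using assms
    by (rule_tac x=d in exI, rule_tac x=d in exI) auto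
  hence R0: "R {d..d}" unfolding R_def by simp
  have sub: "R B \<Longrightarrow> B \<subseteq> {1..d}" for B
    unfolding R_def same_sign_run_def using assms(1) by auto
  have "\<forall>B. R B \<longrightarrow> card B < Suc d"
  proof (intro allI impI)
    fix B assume "R B"
    hence "card B \<le> card {1..d}" using sub by (intro card_mono) auto
    thus "card B < Suc d" by simp
  qed
  then obtain B where B: "R B" and mx: "\<forall>C. R C \<longrightarrow> card C \<le> card B"
    using Lattices_Big.ex_has_greatest_nat[of R "{d..d}" card "Suc d"] R0 by blast
  have "parity_block p B"
    unfolding parity_block_def
  proof (intro conjI allI impI)
    show "same_sign_run p B" using B R_def by simp
    fix C assume C: "same_sign_run p C \<and> B \<subseteq> C"
    hence RC: "R C" using B unfolding R_def by auto
    have fC: "finite C" using sub[OF RC] finite_subset by blast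
    have "card C \<le> card B" using mx RC by simp
    moreover have "card B \<le> card C" using C fC by (intro card_mono) auto
    ultimately show "C = B" using C fC by (metis card_subset_eq le_antisym)
  qed
  thus ?thesis using B R_def by auto
qed

lemma run_sign:
  assumes "same_sign_run p B" "i \<in> B" "j \<in> B"
  shows "col_pos p i = col_pos p j"
  using assms unfolding same_sign_run_def by blast

lemma lbp_iff:
  assumes "frob_d p = d" "d \<ge> 1"
  shows "last_block_positive p \<longleftrightarrow> col_pos p d"
proof
  assume "last_block_positive p" thus "col_pos p d" using assms unfolding last_block_positive_def by auto
next
  assume cp: "col_pos p d"
  obtain B where B: "parity_block p B" "d \<in> B" using last_block_exists[OF assms] by blast
  have "\<forall>i\<in>B. col_pos p i" using B cp run_sign[of p B] unfolding parity_block_def by blast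
  thus "last_block_positive p" using B assms unfolding last_block_positive_def by auto
qed

lemma lbn_iff:
  assumes "frob_d p = d" "d \<ge> 1"
  shows "last_block_negative p \<longleftrightarrow> \<not> col_pos p d"
proof
  assume "last_block_negative p" thus "\<not> col_pos p d" using assms unfolding last_block_negative_def by auto
next
  assume cp: "\<not> col_pos p d"
  obtain B where B: "parity_block p B" "d \<in> B" using last_block_exists[OF assms] by blast
  have "\<forall>i\<in>B. \<not> col_pos p i" using B cp run_sign[of p B] unfolding parity_block_def by blast
  thus "last_block_negative p" using B assms unfolding last_block_negative_def by auto
qed

definition PD :: "nat \<Rightarrow> nat list set" where
  "PD d = {p. sorted_wrt (\<ge>) p \<and> 0 \<notin> set p \<and> frob_d p = d}"

lemma sorted_nth_mono:
  assumes "sorted_wrt (\<ge>) (p::nat list)" "i \<le> j" "j < length p"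
  shows "p ! j \<le> p ! i"
  using assms sorted_wrt_nth_less[OF assms(1)] by (cases "i = j") auto

lemma part_nth: "1 \<le> i \<Longrightarrow> i \<le> length p \<Longrightarrow> part p i = p ! (i - 1)"
  by (simp add: part_def)

lemma frob_d_Phi:
  assumes t: "t \<in> Lm d" and b: "b \<in> Bm d"
  shows "frob_d (map (\<lambda>x. x + d) t @ b) = d"
proof -
  let ?p = "map (\<lambda>x. x + d) t @ b"
  have lt: "length t = d" using t by (simp add: Lm_def)
  have "{i \<in> {1..length ?p}. i \<le> part ?p i} = {1..d}"
  proof (intro set_eqI iffI)
    fix i assume "i \<in> {i \<in> {1..length ?p}. i \<le> part ?p i}"
    hence i: "1 \<le> i" "i \<le> length ?p" "i \<le> ?p ! (i - 1)" by (auto simp: part_nth)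
    show "i \<in> {1..d}"
    proof (rule ccontr)
      assume "i \<notin> {1..d}"
      hence "i > d" using i by auto
      hence "?p ! (i - 1) = b ! (i - 1 - d)" using lt by (subst nth_append_right) auto
      moreover have "b ! (i - 1 - d) \<in> set b" using i \<open>i > d\<close> lt by auto
      ultimately have "?p ! (i - 1) \<le> d" using b by (auto simp: Bm_def)
      thus False using i \<open>i > d\<close> by simp
    qed
  next
    fix i assume "i \<in> {1..d}"
    hence i: "1 \<le> i" "i \<le> d" by auto
    hence "?p ! (i - 1) = t ! (i - 1) + d" using lt by (subst nth_append_left) auto
    thus "i \<in> {i \<in> {1..length ?p}. i \<le> part ?p i}" using i lt by (auto simp: part_nth)
  qed
  thus ?thesis unfolding frob_d_def by simp
qed

lemma PD_structure:
  assumes "p \<in> PD d" "d \<ge> 1"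
  shows "d \<le> length p" "\<forall>x\<in>set (take d p). d \<le> x" "\<forall>x\<in>set (drop d p). x \<le> d"
proof -
  have st: "sorted_wrt (\<ge>) p" and fd: "frob_d p = d" using assms by (auto simp: PD_def)
  define S where "S = {i \<in> {1..length p}. i \<le> part p i}"
  have cS: "card S = d" using fd unfolding S_def frob_d_def by simp
  have c1: "d \<le> length p \<and> d \<le> p ! (d - 1)"
  proof (rule ccontr)
    assume nc: "\<not> (d \<le> length p \<and> d \<le> p ! (d - 1))"
    have "S \<subseteq> {1..d - 1}"
    proof
      fix i assume "i \<in> S"
      hence i: "1 \<le> i" "i \<le> length p" "i \<le> p ! (i - 1)" by (auto simp: S_def part_nth)
      show "i \<in> {1..d - 1}"
      proof (rule ccontr)
        assume "i \<notin> {1..d - 1}"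
        hence "i \<ge> d" using i by auto
        hence "d \<le> length p" using i by simp
        hence lt: "p ! (d - 1) < d" using nc by simp
        have "p ! (i - 1) \<le> p ! (d - 1)" using \<open>i \<ge> d\<close> i assms(2)
          by (intro sorted_nth_mono[OF st]) auto
        thus False using lt i \<open>i \<ge> d\<close> by simp
      qed
    qed
    hence "card S \<le> d - 1" using card_mono[of "{1..d-1}" S] by simp
    thus False using cS assms(2) by simp
  qed
  show "d \<le> length p" using c1 by simp
  show "\<forall>x\<in>set (take d p). d \<le> x"
  proof
    fix x assume "x \<in> set (take d p)"
    then obtain j where j: "j < d" "j < length p" "x = p ! j" by (auto simp: in_set_conv_nth)
    have "p ! (d - 1) \<le> p ! j" using j c1 by (intro sorted_nth_mono[OF st]) auto
    thus "d \<le> x" using c1 j by simp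
  qed
  have c2: "d < length p \<Longrightarrow> p ! d \<le> d"
  proof (rule ccontr)
    assume l: "d < length p" and nc: "\<not> p ! d \<le> d"
    have "{1..Suc d} \<subseteq> S"
    proof
      fix i assume "i \<in> {1..Suc d}"
      hence i: "1 \<le> i" "i \<le> Suc d" by auto
      have "p ! d \<le> p ! (i - 1)" using i l by (intro sorted_nth_mono[OF st]) auto
      thus "i \<in> S" using i l nc by (auto simp: S_def part_nth)
    qed
    moreover have "finite S" by (simp add: S_def)
    ultimately have "Suc d \<le> card S" using card_mono[of S "{1..Suc d}"] by simp
    thus False using cS by simp
  qed
  show "\<forall>x\<in>set (drop d p). x \<le> d"
  proof
    fix x assume "x \<in> set (drop d p)"
    then obtain k where "k < length (drop d p)" "x = drop d p ! k" by (auto simp: in_set_conv_nth)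
    hence j: "k + d < length p" "x = p ! (k + d)" by (auto simp: add.commute)
    have "p ! (k + d) \<le> p ! d" using j by (intro sorted_nth_mono[OF st]) auto
    thus "x \<le> d" using c2 j by simp
  qed
qed

lemma bij_Phi:
  assumes "d \<ge> 1"
  shows "bij_betw (\<lambda>(t,b). map (\<lambda>x. x + d) t @ b) (Lm d \<times> Bm d) (PD d)"
proof -
  define f :: "nat list \<times> nat list \<Rightarrow> nat list" where "f = (\<lambda>(t,b). map (\<lambda>x. x + d) t @ b)"
  define g :: "nat list \<Rightarrow> nat list \<times> nat list" where "g = (\<lambda>p. (map (\<lambda>x. x - d) (take d p), drop d p))"
  have 1: "\<forall>a\<in>Lm d \<times> Bm d. g (f a) = a"
    by (auto simp: f_def g_def Lm_def comp_def)
  have 2: "\<forall>p\<in>PD d. f (g p) = p"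
  proof
    fix p assume p: "p \<in> PD d"
    have "map (\<lambda>x. x - d + d) (take d p) = take d p"
      using PD_structure(2)[OF p assms] by (intro map_idI) auto
    thus "f (g p) = p" by (simp add: f_def g_def comp_def)
  qed
  have 3: "f ` (Lm d \<times> Bm d) \<subseteq> PD d"
  proof
    fix p assume "p \<in> f ` (Lm d \<times> Bm d)"
    then obtain t b where tb: "t \<in> Lm d" "b \<in> Bm d" "p = f (t,b)" by auto
    have "frob_d p = d" using frob_d_Phi[OF tb(1,2)] tb(3) by (simp add: f_def)
    moreover have "sorted_wrt (\<ge>) p" using tb
      by (auto simp: f_def Lm_def Bm_def sorted_wrt_append sorted_wrt_map)
    moreover have "0 \<notin> set p" using tb assms by (auto simp: f_def Bm_def)
    ultimately show "p \<in> PD d" by (simp add: PD_def)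
  qed
  have 4: "g ` PD d \<subseteq> Lm d \<times> Bm d"
  proof
    fix y assume "y \<in> g ` PD d"
    then obtain p where p: "p \<in> PD d" "y = g p" by auto
    note S = PD_structure[OF p(1) assms]
    have st: "sorted_wrt (\<ge>) p" "0 \<notin> set p" using p by (auto simp: PD_def)
    have "sorted_wrt (\<ge>) (take d p)" "sorted_wrt (\<ge>) (drop d p)"
      using st by (auto simp: sorted_wrt_take sorted_wrt_drop)
    moreover have "sorted_wrt (\<lambda>x y. y - d \<le> x - d) (take d p)"
      using calculation(1) by (rule sorted_wrt_mono_rel[rotated]) auto
    moreover have "\<forall>x\<in>set (drop d p). 1 \<le> x"
      using st(2) by (metis in_set_dropD less_one not_le)
    ultimately show "y \<in> Lm d \<times> Bm d" using p S
      by (auto simp: g_def Lm_def Bm_def sorted_wrt_map)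
  qed
  have "bij_betw f (Lm d \<times> Bm d) (PD d)" by (rule bij_betw_byWitness[OF 1 2 3 4])
  thus ?thesis by (simp add: f_def)
qed



lemma bij_betw_restrict:
  assumes "bij_betw f A B" "\<And>a. a \<in> A \<Longrightarrow> P (f a) \<longleftrightarrow> Q a"
  shows "bij_betw f {a\<in>A. Q a} {b\<in>B. P b}"
  using assms unfolding bij_betw_def inj_on_def by (auto simp: image_iff)

definition FF :: "nat \<Rightarrow> (nat \<times> nat) \<times> (nat list \<times> nat list) \<Rightarrow> nat list" where
  "FF m = (\<lambda>((e,c),(s,b)). map (\<lambda>x. x + Suc m) (map (\<lambda>x. x + e) (s @ [0])) @ (replicate c (Suc m) @ b))"

lemma bij_FF: "bij_betw (FF m) ((UNIV \<times> UNIV) \<times> (Lm m \<times> Bm m)) (PD (Suc m))"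
proof -
  define R :: "(nat \<times> nat) \<times> (nat list \<times> nat list) \<Rightarrow> (nat \<times> nat list) \<times> (nat \<times> nat list)"
    where "R = (\<lambda>((e,c),(s,b)). ((e,s),(c,b)))"
  define R' :: "(nat \<times> nat list) \<times> (nat \<times> nat list) \<Rightarrow> (nat \<times> nat) \<times> (nat list \<times> nat list)"
    where "R' = (\<lambda>((e,s),(c,b)). ((e,c),(s,b)))"
  have bR: "bij_betw R ((UNIV \<times> UNIV) \<times> (Lm m \<times> Bm m)) ((UNIV \<times> Lm m) \<times> (UNIV \<times> Bm m))"
    by (rule bij_betw_byWitness[where f'=R']) (auto simp: R_def R'_def)
  have bM: "bij_betw (map_prod (\<lambda>(e,s). map (\<lambda>x. x + e) (s @ [0])) (\<lambda>(c,b). replicate c (Suc m) @ b))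
       ((UNIV \<times> Lm m) \<times> (UNIV \<times> Bm m)) (Lm (Suc m) \<times> Bm (Suc m))"
    by (rule bij_betw_map_prod[OF bij_L bij_B])
  have bP: "bij_betw (\<lambda>(t,b). map (\<lambda>x. x + Suc m) t @ b) (Lm (Suc m) \<times> Bm (Suc m)) (PD (Suc m))"
    by (rule bij_Phi) simp
  have "bij_betw ((\<lambda>(t,b). map (\<lambda>x. x + Suc m) t @ b) \<circ>
      map_prod (\<lambda>(e,s). map (\<lambda>x. x + e) (s @ [0])) (\<lambda>(c,b). replicate c (Suc m) @ b) \<circ> R)
      ((UNIV \<times> UNIV) \<times> (Lm m \<times> Bm m)) (PD (Suc m))"
    by (rule bij_betw_trans[OF bR bij_betw_trans[OF bM bP]])
  moreover have "((\<lambda>(t,b). map (\<lambda>x. x + Suc m) t @ b) \<circ>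
      map_prod (\<lambda>(e,s). map (\<lambda>x. x + e) (s @ [0])) (\<lambda>(c,b). replicate c (Suc m) @ b) \<circ> R) = FF m"
    by (auto simp: fun_eq_iff R_def FF_def)
  ultimately show ?thesis by simp
qed

lemma FF_props:
  assumes "s \<in> Lm m" "b \<in> Bm m"
  shows "sum_list (FF m ((e,c),(s,b))) = (Suc m * Suc m + Suc m * e + Suc m * c) + (sum_list s + sum_list b)"
    and "col_pos (FF m ((e,c),(s,b))) (Suc m) \<longleftrightarrow> c < e"
proof -
  have ls: "length s = m" using assms by (simp add: Lm_def)
  have bm: "\<forall>x\<in>set b. x \<le> m" using assms by (simp add: Bm_def)
  let ?p = "FF m ((e,c),(s,b))"
  have p: "?p = map (\<lambda>x. x + (e + Suc m)) s @ [e + Suc m] @ replicate c (Suc m) @ b"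
    by (simp add: FF_def comp_def add.assoc)
  have "sum_list ?p = (sum_list s + m * (e + Suc m)) + (e + Suc m) + c * Suc m + sum_list b"
    unfolding p using ls sum_list_map_plus[of "e + Suc m" s] by (simp add: sum_list_replicate add.assoc mult.commute)
  thus "sum_list (FF m ((e,c),(s,b))) = (Suc m * Suc m + Suc m * e + Suc m * c) + (sum_list s + sum_list b)"
    by (simp add: algebra_simps)
  have "part ?p (Suc m) = e + Suc m"
    using ls by (simp add: part_def p nth_append)
  hence fx: "frob_x ?p (Suc m) = e" by (simp add: frob_x_def)
  have "filter (\<lambda>a. Suc m \<le> a) b = []" using bm by (auto simp: filter_empty_conv)
  hence "conj_part ?p (Suc m) = Suc m + c"
    using ls by (simp add: conj_part_def p filter_replicate)
  hence fy: "frob_y ?p (Suc m) = c" by (simp add: frob_y_def)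
  have "(1 \<le> int e - int c) \<longleftrightarrow> c < e" by arith
  thus "col_pos ?p (Suc m) \<longleftrightarrow> c < e" by (simp add: col_pos_def fx fy)
qed

lemma qpoch_Suc: "qpoch_q (Suc m) = qpoch_q m * (1 - fps_X ^ Suc m)"
  by (simp add: qpoch_q_def prod.nat_ivl_Suc' mult.commute)

lemma qpoch_0: "fps_nth (qpoch_q m) 0 = 1"
  by (induction m) (auto simp: qpoch_Suc, simp add: qpoch_q_def)



lemma alg_id:
  fixes Q :: "rat fps" and D K :: nat
  assumes "D \<ge> 1" "fps_nth Q 0 = 1"
  shows "fps_X ^ K * (inverse (1 - fps_X ^ (2 * D)) * inverse (1 - fps_X ^ D)) * (inverse Q * inverse Q)
       = fps_X ^ K / ((Q * (1 - fps_X ^ D))\<^sup>2 * (1 + fps_X ^ D))"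
proof -
  have e: "(1 - fps_X ^ (2 * D) :: rat fps) = (1 - fps_X ^ D) * (1 + fps_X ^ D)"
    by (simp add: power_mult algebra_simps power2_eq_square mult.commute[of 2 D])
  have n0: "fps_nth ((Q * (1 - fps_X ^ D))\<^sup>2 * (1 + fps_X ^ D)) 0 \<noteq> 0"
    using assms by (simp add: power2_eq_square)
  show ?thesis
    unfolding fps_divide_unit[OF n0] e
    by (simp add: fps_inverse_mult power2_eq_square mult_ac)
qed

definition W1 :: "nat \<Rightarrow> nat \<times> nat \<Rightarrow> nat" where
  "W1 D = (\<lambda>(e,c). D * D + D * e + D * c)"

definition W2 :: "nat list \<times> nat list \<Rightarrow> nat" where
  "W2 = (\<lambda>(s,b). sum_list s + sum_list b)"

lemma LB_facts:
  "finfib (Lm m \<times> Bm m) W2 \<and> gf (Lm m \<times> Bm m) W2 = inverse (qpoch_q m) * inverse (qpoch_q m)"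
proof -
  have fL: "finfib (Lm m) sum_list" and gL: "gf (Lm m) sum_list = inverse (qpoch_q m)" using gf_L by auto
  have fB: "finfib (Bm m) sum_list" and gB: "gf (Bm m) sum_list = inverse (qpoch_q m)" using gf_B by auto
  have "W2 = (\<lambda>(s,b). sum_list s + sum_list b)" by (simp add: W2_def)
  thus ?thesis using finfib_prod[OF fL fB] gf_prod[OF fL fB] gL gB by simp
qed

lemma Eplus_facts:
  assumes "D \<ge> 1"
  shows "finfib {(e,c). c < e} (W1 D) \<and>
     gf {(e,c). c < e} (W1 D) = fps_X ^ (D * D + D) * (inverse (1 - fps_X ^ (2 * D)) * inverse (1 - fps_X ^ D))"
proof -
  define f :: "nat \<times> nat \<Rightarrow> nat \<times> nat" where "f = (\<lambda>(c,k). (c + k + 1, c))"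
  define f' :: "nat \<times> nat \<Rightarrow> nat \<times> nat" where "f' = (\<lambda>(e,c). (c, e - c - 1))"
  have bij: "bij_betw f (UNIV \<times> UNIV) {(e,c). c < e}"
    by (rule bij_betw_byWitness[where f'=f']) (auto simp: f_def f'_def)
  define w0 :: "nat \<times> nat \<Rightarrow> nat" where "w0 = (\<lambda>(c,k). (2 * D) * c + D * k)"
  have w: "W1 D (f a) = w0 a + (D * D + D)" if "a \<in> UNIV \<times> UNIV" for a
    by (cases a) (simp add: W1_def f_def w0_def algebra_simps)
  have f1: "finfib (UNIV::nat set) (\<lambda>c. (2 * D) * c)" "finfib (UNIV::nat set) (\<lambda>c. D * c)"
    using assms by (auto intro: finfib_lin)
  have fw0: "finfib (UNIV \<times> UNIV) w0" unfolding w0_def by (rule finfib_prod[OF f1])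
  have "gf (UNIV \<times> UNIV) w0 = gf (UNIV::nat set) (\<lambda>c. (2 * D) * c) * gf (UNIV::nat set) (\<lambda>c. D * c)"
    unfolding w0_def by (rule gf_prod[OF f1])
  also have "\<dots> = inverse (1 - fps_X ^ (2 * D)) * inverse (1 - fps_X ^ D)"
    using assms by (simp add: gf_lin)
  finally have g0: "gf (UNIV \<times> UNIV) w0 = inverse (1 - fps_X ^ (2 * D)) * inverse (1 - fps_X ^ D)" .
  have "gf {(e,c). c < e} (W1 D) = gf (UNIV \<times> UNIV) (\<lambda>a. w0 a + (D * D + D))"
    by (rule gf_bij[OF bij]) (rule w)
  also have "\<dots> = fps_X ^ (D * D + D) * gf (UNIV \<times> UNIV) w0" by (rule gf_shift)
  finally have "gf {(e,c). c < e} (W1 D) = fps_X ^ (D * D + D) * (inverse (1 - fps_X ^ (2 * D)) * inverse (1 - fps_X ^ D))"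
    using g0 by simp
  moreover have "finfib {(e,c). c < e} (W1 D)"
    by (rule finfib_bij[OF bij _ finfib_shift[OF fw0]]) (rule w)
  ultimately show ?thesis by simp
qed

lemma Eminus_facts:
  assumes "D \<ge> 1"
  shows "finfib {(e,c). \<not> c < e} (W1 D) \<and>
     gf {(e,c). \<not> c < e} (W1 D) = fps_X ^ (D * D) * (inverse (1 - fps_X ^ (2 * D)) * inverse (1 - fps_X ^ D))"
proof -
  define f :: "nat \<times> nat \<Rightarrow> nat \<times> nat" where "f = (\<lambda>(e,k). (e, e + k))"
  define f' :: "nat \<times> nat \<Rightarrow> nat \<times> nat" where "f' = (\<lambda>(e,c). (e, c - e))"
  have bij: "bij_betw f (UNIV \<times> UNIV) {(e,c). \<not> c < e}"
    by (rule bij_betw_byWitness[where f'=f']) (auto simp: f_def f'_def)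
  define w0 :: "nat \<times> nat \<Rightarrow> nat" where "w0 = (\<lambda>(c,k). (2 * D) * c + D * k)"
  have w: "W1 D (f a) = w0 a + (D * D)" if "a \<in> UNIV \<times> UNIV" for a
    by (cases a) (simp add: W1_def f_def w0_def algebra_simps)
  have f1: "finfib (UNIV::nat set) (\<lambda>c. (2 * D) * c)" "finfib (UNIV::nat set) (\<lambda>c. D * c)"
    using assms by (auto intro: finfib_lin)
  have fw0: "finfib (UNIV \<times> UNIV) w0" unfolding w0_def by (rule finfib_prod[OF f1])
  have "gf (UNIV \<times> UNIV) w0 = gf (UNIV::nat set) (\<lambda>c. (2 * D) * c) * gf (UNIV::nat set) (\<lambda>c. D * c)"
    unfolding w0_def by (rule gf_prod[OF f1])
  also have "\<dots> = inverse (1 - fps_X ^ (2 * D)) * inverse (1 - fps_X ^ D)"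
    using assms by (simp add: gf_lin)
  finally have g0: "gf (UNIV \<times> UNIV) w0 = inverse (1 - fps_X ^ (2 * D)) * inverse (1 - fps_X ^ D)" .
  have "gf {(e,c). \<not> c < e} (W1 D) = gf (UNIV \<times> UNIV) (\<lambda>a. w0 a + (D * D))"
    by (rule gf_bij[OF bij]) (rule w)
  also have "\<dots> = fps_X ^ (D * D) * gf (UNIV \<times> UNIV) w0" by (rule gf_shift)
  finally have "gf {(e,c). \<not> c < e} (W1 D) = fps_X ^ (D * D) * (inverse (1 - fps_X ^ (2 * D)) * inverse (1 - fps_X ^ D))"
    using g0 by simp
  moreover have "finfib {(e,c). \<not> c < e} (W1 D)"
    by (rule finfib_bij[OF bij _ finfib_shift[OF fw0]]) (rule w)
  ultimately show ?thesis by simp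
qed

lemma main_gf:
  fixes Pr :: "bool \<Rightarrow> bool"
  assumes "Pr = id \<or> Pr = Not"
  shows "gf {p\<in>PD (Suc m). Pr (col_pos p (Suc m))} sum_list =
         gf {(e,c). Pr (c < e)} (W1 (Suc m)) * gf (Lm m \<times> Bm m) W2"
proof -
  let ?E = "{(e::nat,c::nat). Pr (c < e)}"
  have set_eq: "{x \<in> (UNIV \<times> UNIV) \<times> (Lm m \<times> Bm m). Pr (snd (fst x) < fst (fst x))}
      = ?E \<times> (Lm m \<times> Bm m)" by auto
  have b: "bij_betw (FF m) {x \<in> (UNIV \<times> UNIV) \<times> (Lm m \<times> Bm m). Pr (snd (fst x) < fst (fst x))}
     {p\<in>PD (Suc m). Pr (col_pos p (Suc m))}"
    by (rule bij_betw_restrict[OF bij_FF]) (auto simp: FF_props(2))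
  have b2: "bij_betw (FF m) (?E \<times> (Lm m \<times> Bm m)) {p\<in>PD (Suc m). Pr (col_pos p (Suc m))}"
    using b set_eq by simp
  have w: "sum_list (FF m a) = (\<lambda>(x,y). W1 (Suc m) x + W2 y) a" if "a \<in> ?E \<times> (Lm m \<times> Bm m)" for a
    using that by (auto simp: FF_props(1) W1_def W2_def)
  have "gf {p\<in>PD (Suc m). Pr (col_pos p (Suc m))} sum_list = gf (?E \<times> (Lm m \<times> Bm m)) (\<lambda>(x,y). W1 (Suc m) x + W2 y)"
    by (rule gf_bij[OF b2]) (rule w)
  also have "\<dots> = gf ?E (W1 (Suc m)) * gf (Lm m \<times> Bm m) W2"
  proof (rule gf_prod)
    show "finfib ?E (W1 (Suc m))"
      using assms Eplus_facts[of "Suc m"] Eminus_facts[of "Suc m"] by auto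
    show "finfib (Lm m \<times> Bm m) W2" using LB_facts by simp
  qed
  finally show ?thesis .
qed



lemma zero_case:
  assumes "d \<ge> 1"
  shows "cnt {p\<in>PD d. P p} sum_list 0 = 0"
proof -
  have "{x\<in>{p\<in>PD d. P p}. sum_list x = 0} = {}"
  proof (rule ccontr)
    assume "{x\<in>{p\<in>PD d. P p}. sum_list x = 0} \<noteq> {}"
    then obtain p where p: "p \<in> PD d" "sum_list p = 0" by auto
    hence "p = []" by (cases p) (auto simp: PD_def)
    moreover have "frob_d [] = 0" by (simp add: frob_d_def)
    ultimately show False using p assms by (simp add: PD_def)
  qed
  thus ?thesis unfolding cnt_def by (metis card.empty)
qed

theorem theorem1p4:
  fixes d :: nat
  assumes "d \<ge> 1"
  shows "Abs_fps (\<lambda>n. if n = 0 then 0 else of_nat (a_plus n d)) =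
           fps_X ^ (d\<^sup>2 + d) / ((qpoch_q d)\<^sup>2 * (1 + fps_X ^ d))
       \<and> Abs_fps (\<lambda>n. if n = 0 then 0 else of_nat (a_minus n d)) =
           fps_X ^ (d\<^sup>2) / ((qpoch_q d)\<^sup>2 * (1 + fps_X ^ d))"
proof -
  obtain m where dm: "d = Suc m" using assms by (cases d) auto
  have q: "qpoch_q d = qpoch_q m * (1 - fps_X ^ d)" using dm qpoch_Suc by simp
  have sq: "d\<^sup>2 = d * d" by (simp add: power2_eq_square)
  have ap: "a_plus n d = cnt {p\<in>PD d. id (col_pos p d)} sum_list n" for n
  proof -
    have "{p. is_partition n p \<and> frob_d p = d \<and> last_block_positive p} =
          {x\<in>{p\<in>PD d. id (col_pos p d)}. sum_list x = n}"
      using lbp_iff[of _ d] assms by (auto simp: is_partition_def PD_def)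
    thus ?thesis by (simp add: a_plus_def cnt_def)
  qed
  have am: "a_minus n d = cnt {p\<in>PD d. Not (col_pos p d)} sum_list n" for n
  proof -
    have "{p. is_partition n p \<and> frob_d p = d \<and> last_block_negative p} =
          {x\<in>{p\<in>PD d. Not (col_pos p d)}. sum_list x = n}"
      using lbn_iff[of _ d] assms by (auto simp: is_partition_def PD_def)
    thus ?thesis by (simp add: a_minus_def cnt_def)
  qed
  have L1: "Abs_fps (\<lambda>n. if n = 0 then 0 else of_nat (a_plus n d)) = gf {p\<in>PD d. id (col_pos p d)} sum_list"
    unfolding gf_def ap using zero_case[OF assms] by (intro fps_ext) simp
  have L2: "Abs_fps (\<lambda>n. if n = 0 then 0 else of_nat (a_minus n d)) = gf {p\<in>PD d. Not (col_pos p d)} sum_list"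
    unfolding gf_def am using zero_case[OF assms] by (intro fps_ext) simp
  have G1: "gf {p\<in>PD d. id (col_pos p d)} sum_list =
      fps_X ^ (d * d + d) * (inverse (1 - fps_X ^ (2 * d)) * inverse (1 - fps_X ^ d)) *
      (inverse (qpoch_q m) * inverse (qpoch_q m))"
    using main_gf[of id m] Eplus_facts[of d] LB_facts[of m] dm by simp
  have G2: "gf {p\<in>PD d. Not (col_pos p d)} sum_list =
      fps_X ^ (d * d) * (inverse (1 - fps_X ^ (2 * d)) * inverse (1 - fps_X ^ d)) *
      (inverse (qpoch_q m) * inverse (qpoch_q m))"
    using main_gf[of Not m] Eminus_facts[of d] LB_facts[of m] dm by simp
  show ?thesis
    unfolding L1 L2 G1 G2 alg_id[OF assms qpoch_0] q sq by (intro conjI refl)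
qed

end
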